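(* Let $n$ be the number of categories and $\epsilon\in(0,1)$. Let $\widehat{P}$ be an empirical distribution of $p$ samples and $\widehat{Q}$ an empirical distribution of $p'$ samples, both over the same $n$ categories. Let $$\bar{\mathcal{Q}}=\left\{Q\in\mathbb{S}^n:\ D(\widehat{Q}\,\|\,Q)\le\frac{1}{p'}\log\left(\frac1\epsilon\right)+\frac{2n}{p'}\log(p'+1)\right\},$$ and let $D^*_0=\min_{Q\in\bar{\mathcal{Q}}}D(\widehat{P}\,\|\,Q)$. If $$D^*_0\ \ge\ \frac1p\log\left(\frac1\epsilon\right)+\frac{2n}{p}\log(p+1),$$ then there is no distribution $Q$ on the $n$ categories such that simultaneously (1) $\widehat{Q}$ is typical at significance level $\epsilon$ with respect to $\{Q\}$ (as an empirical distribution of $p'$ samples), and (2) $\widehat{P}$ is typical at significance level $\epsilon$ with respect to $\{Q\}$ (as an empirical distribution of $p$ samples).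
   Context: $\mathbb{S}^n$ is the probability simplex in $\mathbb{R}^n$, and $D(P\|Q)=\sum_iP_i\log(P_i/Q_i)$ is the Kullback–Leibler divergence. An empirical distribution of $m$ samples over $n$ categories is a vector $\frac1m(m_1,\dots,m_n)$ with nonnegative integers $m_i$ summing to $m$. For a distribution $Q$ and a set $\mathcal{S}$ of empirical distributions of $m$ samples, $\mathbb{P}_Q(\mathcal{S})$ is the probability that $m$ i.i.d. draws from $Q$ have empirical distribution in $\mathcal{S}$. Typical: let $\widehat{P}^1,\widehat{P}^2,\dots$ be an ordering of all empirical distributions of $m$ samples over the $n$ categories with $\mathbb{P}_Q(\widehat{P}^1)\le\mathbb{P}_Q(\widehat{P}^2)\le\cdots$; an empirical distribution $\widehat{P}^\ell$ is typical at significance level $\epsilon$ with respect to a set $\mathcal{Q}$ of distributions iff $\sup_{Q\in\mathcal{Q}}\mathbb{P}_Q(\{\widehat{P}^1,\dots,\widehat{P}^\ell\})\ge\epsilon$ for any such ordering (the ordering depending on $Q$). *)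

theory Defs
  imports "HOL-Analysis.Analysis"
begin

definition prob_simplex :: "nat \<Rightarrow> (nat \<Rightarrow> real) set" where
  "prob_simplex n = {Q. (\<forall>i<n. 0 \<le> Q i) \<and> (\<forall>i\<ge>n. Q i = 0) \<and> (\<Sum>i<n. Q i) = 1}"

text \<open>Count vectors (m_1,...,m_n) of m samples; the empirical distribution is counts / m.\<close>
definition emp_counts :: "nat \<Rightarrow> nat \<Rightarrow> (nat \<Rightarrow> nat) set" where
  "emp_counts m n = {k. (\<forall>i\<ge>n. k i = 0) \<and> (\<Sum>i<n. k i) = m}"

definition emp_dist :: "nat \<Rightarrow> (nat \<Rightarrow> nat) \<Rightarrow> (nat \<Rightarrow> real)" where
  "emp_dist m k = (\<lambda>i. real (k i) / real m)"

text \<open>KL divergence with the conventions 0 log(0/q) = 0 and p log(p/0) = +infinity (p > 0).\<close>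
definition KL :: "nat \<Rightarrow> (nat \<Rightarrow> real) \<Rightarrow> (nat \<Rightarrow> real) \<Rightarrow> ereal" where
  "KL n P Q = (\<Sum>i<n. if P i = 0 then 0 else if Q i = 0 then \<infinity>
                        else ereal (P i * ln (P i / Q i)))"

text \<open>Probability under Q (m i.i.d. draws) that the count vector equals k (multinomial).\<close>
definition mprob :: "nat \<Rightarrow> nat \<Rightarrow> (nat \<Rightarrow> real) \<Rightarrow> (nat \<Rightarrow> nat) \<Rightarrow> real" where
  "mprob m n Q k = fact m / (\<Prod>i<n. fact (k i)) * (\<Prod>i<n. Q i ^ k i)"

definition prob_ordering :: "nat \<Rightarrow> nat \<Rightarrow> (nat \<Rightarrow> real) \<Rightarrow> (nat \<Rightarrow> nat \<Rightarrow> nat) \<Rightarrow> bool" where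
  "prob_ordering m n Q \<sigma> \<longleftrightarrow>
     bij_betw \<sigma> {..<card (emp_counts m n)} (emp_counts m n) \<and>
     (\<forall>i j. i \<le> j \<and> j < card (emp_counts m n) \<longrightarrow> mprob m n Q (\<sigma> i) \<le> mprob m n Q (\<sigma> j))"

text \<open>P_Q({sigma 0, ..., sigma l}) where sigma l = k.\<close>
definition prefix_mass :: "nat \<Rightarrow> nat \<Rightarrow> (nat \<Rightarrow> real) \<Rightarrow> (nat \<Rightarrow> nat \<Rightarrow> nat) \<Rightarrow> (nat \<Rightarrow> nat) \<Rightarrow> real" where
  "prefix_mass m n Q \<sigma> k =
     (\<Sum>j\<in>{..the_inv_into {..<card (emp_counts m n)} \<sigma> k}. mprob m n Q (\<sigma> j))"

definition typical :: "nat \<Rightarrow> nat \<Rightarrow> (nat \<Rightarrow> real) set \<Rightarrow> real \<Rightarrow> (nat \<Rightarrow> nat) \<Rightarrow> bool" where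
  "typical m n QQ \<epsilon> k \<longleftrightarrow>
     (\<forall>\<sigma>. (\<forall>Q\<in>QQ. prob_ordering m n Q (\<sigma> Q)) \<longrightarrow>
           (SUP Q\<in>QQ. prefix_mass m n Q (\<sigma> Q) k) \<ge> \<epsilon>)"

end

theory Submission
  imports Defs
begin

lemma binom_term:
  fixes a b :: nat
  shows "((a+b) choose a) * a^a * b^b \<le> (a+b)^(a+b)"
proof -
  have "(a+b)^(a+b) = (\<Sum>k\<le>a+b. ((a+b) choose k) * a^k * b^(a+b-k))"
    using binomial_ring[of a b "a+b"] by simp
  moreover have "((a+b) choose a) * a^a * b^(a+b-a) \<le> (\<Sum>k\<le>a+b. ((a+b) choose k) * a^k * b^(a+b-k))"
    by (rule member_le_sum[where i=a and f="\<lambda>k. ((a+b) choose k) * a^k * b^(a+b-k)"]) auto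
  ultimately show ?thesis by simp
qed

lemma multinom_bound:
  fixes k :: "nat \<Rightarrow> nat"
  shows "fact (\<Sum>i<n. k i) * (\<Prod>i<n. k i ^ k i) \<le> (\<Sum>i<n. k i) ^ (\<Sum>i<n. k i) * (\<Prod>i<n. (fact (k i) :: nat))"
proof (induction n)
  case 0
  then show ?case by simp
next
  case (Suc n)
  define s where "s = (\<Sum>i<n. k i)"
  define c where "c = k n"
  define P where "P = (\<Prod>i<n. k i ^ k i)"
  define F where "F = (\<Prod>i<n. (fact (k i) :: nat))"
  have IH: "fact s * P \<le> s^s * F" using Suc unfolding s_def P_def F_def .
  have ff: "fact (s+c) = ((s+c) choose c) * fact s * (fact c :: nat)"
    using binomial_fact_lemma[of c "s+c"] by (simp add: algebra_simps)
  have bt: "((s+c) choose c) * c^c * s^s \<le> (s+c)^(s+c)"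
    using binom_term[of c s] by (simp add: add.commute)
  have "fact (s+c) * (P * c^c) = (((s+c) choose c) * fact c * c^c) * (fact s * P)"
    unfolding ff by (simp only: ac_simps)
  also have "\<dots> \<le> (((s+c) choose c) * fact c * c^c) * (s^s * F)"
    using IH by (rule mult_left_mono) simp
  also have "\<dots> = (((s+c) choose c) * c^c * s^s) * (F * fact c)" by (simp add: algebra_simps)
  also have "\<dots> \<le> (s+c)^(s+c) * (F * fact c)"
    using bt by (rule mult_right_mono) simp
  finally show ?case by (simp add: s_def[symmetric] c_def[symmetric] P_def[symmetric] F_def[symmetric])
qed


lemma emp_counts_fin:
  shows "finite (emp_counts m n) \<and> card (emp_counts m n) \<le> (m+1)^n"
proof -
  let ?g = "\<lambda>k::nat\<Rightarrow>nat. restrict k {..<n}"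
  let ?T = "PiE {..<n} (\<lambda>_. {..m})"
  have inj: "inj_on ?g (emp_counts m n)"
  proof (rule inj_onI)
    fix x y assume x: "x \<in> emp_counts m n" and y: "y \<in> emp_counts m n" and e: "?g x = ?g y"
    show "x = y"
    proof
      fix i show "x i = y i"
      proof (cases "i < n")
        case True then show ?thesis using fun_cong[OF e, of i] by simp
      next
        case False then show ?thesis using x y by (simp add: emp_counts_def)
      qed
    qed
  qed
  have sub: "?g ` emp_counts m n \<subseteq> ?T"
  proof
    fix z assume "z \<in> ?g ` emp_counts m n"
    then obtain k where k: "k \<in> emp_counts m n" and z: "z = ?g k" by blast
    have "\<forall>i<n. k i \<le> m"
    proof (intro allI impI)
      fix i assume "i < n"
      then have "k i \<le> (\<Sum>j<n. k j)" by (intro member_le_sum) auto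
      then show "k i \<le> m" using k by (simp add: emp_counts_def)
    qed
    then show "z \<in> ?T" using z by (auto simp: PiE_def extensional_def)
  qed
  have finT: "finite ?T" by (rule finite_PiE) auto
  have cT: "card ?T = (m+1)^n" by (simp add: card_PiE)
  have fin: "finite (emp_counts m n)"
    using finite_imageD[OF finite_subset[OF sub finT] inj] .
  have "card (emp_counts m n) = card (?g ` emp_counts m n)" using card_image[OF inj] by simp
  also have "\<dots> \<le> card ?T" by (rule card_mono[OF finT sub])
  finally show ?thesis using fin cT by simp
qed

lemma exists_ordering:
  "\<exists>\<sigma>. prob_ordering m n Q \<sigma>"
proof -
  have "finite (emp_counts m n)" using emp_counts_fin by blast
  then obtain xs where xs: "distinct xs" "set xs = emp_counts m n" using finite_distinct_list by blast
  define ys where "ys = sort_key (mprob m n Q) xs"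
  have d: "distinct ys" "set ys = emp_counts m n" using xs by (auto simp: ys_def)
  have len: "length ys = card (emp_counts m n)" using distinct_card[OF d(1)] d(2) by simp
  have s: "sorted (map (mprob m n Q) ys)" unfolding ys_def by (rule sorted_sort_key)
  have "prob_ordering m n Q ((!) ys)"
    unfolding prob_ordering_def
  proof (intro conjI allI impI)
    show "bij_betw ((!) ys) {..<card (emp_counts m n)} (emp_counts m n)"
      by (rule bij_betw_nth) (use d len in auto)
    fix i j assume "i \<le> j \<and> j < card (emp_counts m n)"
    then show "mprob m n Q (ys ! i) \<le> mprob m n Q (ys ! j)"
      using sorted_nth_mono[OF s, of i j] len by simp
  qed
  then show ?thesis by blast
qed


lemma mprob_bound:
  fixes Q :: "nat \<Rightarrow> real"
  assumes Q: "Q \<in> prob_simplex n" and k: "k \<in> emp_counts m n" and m: "0 < m"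
    and pos: "0 < mprob m n Q k"
  shows "\<exists>D. KL n (emp_dist m k) Q = ereal D \<and> mprob m n Q k \<le> exp (- real m * D)"
proof -
  have Qnn: "\<And>i. i < n \<Longrightarrow> 0 \<le> Q i" using Q by (simp add: prob_simplex_def)
  have sk: "(\<Sum>i<n. k i) = m" using k by (simp add: emp_counts_def)
  have pQ: "(\<Prod>i<n. Q i ^ k i) \<noteq> 0"
  proof
    assume "(\<Prod>i<n. Q i ^ k i) = 0"
    then have "mprob m n Q k = 0" unfolding mprob_def by (simp only: mult_zero_right)
    with pos show False by simp
  qed
  have Qpos: "\<And>i. i < n \<Longrightarrow> 0 < k i \<Longrightarrow> 0 < Q i"
  proof -
    fix i assume i: "i < n" and ki: "0 < k i"
    have "Q i ^ k i \<noteq> 0" using pQ i by (simp add: prod_zero_iff)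
    then have "Q i \<noteq> 0" using ki by auto
    then show "0 < Q i" using Qnn[OF i] by simp
  qed
  define f where "f i = (if k i = 0 then 0 else (real (k i) / real m) * ln ((real (k i) / real m) / Q i))" for i
  have MB: "fact m * (\<Prod>i<n. k i ^ k i) \<le> m ^ m * (\<Prod>i<n. (fact (k i) :: nat))"
    using multinom_bound[of k n] sk by simp
  have MBr: "(fact m :: real) * (\<Prod>i<n. real (k i) ^ k i) \<le> real m ^ m * (\<Prod>i<n. (fact (k i) :: real))"
  proof -
    have "real (fact m * (\<Prod>i<n. k i ^ k i)) \<le> real (m ^ m * (\<Prod>i<n. (fact (k i) :: nat)))"
      using MB by linarith
    then show ?thesis by (simp add: of_nat_prod)
  qed
  have KKpos: "(\<Prod>i<n. real (k i) ^ k i) > 0"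
    by (rule prod_pos) (auto simp: zero_less_power_eq)
  have FFpos: "(\<Prod>i<n. (fact (k i) :: real)) > 0" by (rule prod_pos) auto
  have c1: "(fact m :: real) / (\<Prod>i<n. fact (k i)) \<le> real m ^ m / (\<Prod>i<n. real (k i) ^ k i)"
    using MBr KKpos FFpos by (simp add: divide_simps mult.commute)
  have QQnn: "0 \<le> (\<Prod>i<n. Q i ^ k i)" by (rule prod_nonneg) (auto simp: Qnn)
  have "mprob m n Q k \<le> real m ^ m / (\<Prod>i<n. real (k i) ^ k i) * (\<Prod>i<n. Q i ^ k i)"
    unfolding mprob_def by (rule mult_right_mono[OF c1 QQnn])
  also have "\<dots> = (\<Prod>i<n. (real m * Q i / real (k i)) ^ k i)"
  proof -
    have "real m ^ m = (\<Prod>i<n. real m ^ k i)" using power_sum[of "real m" k "{..<n}"] sk by simp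
    then show ?thesis
      by (simp add: power_divide power_mult_distrib prod.distrib prod_dividef)
  qed
  also have "\<dots> = (\<Prod>i<n. exp (- real m * f i))"
  proof (rule prod.cong[OF refl])
    fix i assume "i \<in> {..<n}"
    then have i: "i < n" by simp
    show "(real m * Q i / real (k i)) ^ k i = exp (- real m * f i)"
    proof (cases "k i = 0")
      case True then show ?thesis by (simp add: f_def)
    next
      case False
      have q: "0 < Q i" using Qpos[OF i] False by simp
      define x where "x = real m * Q i / real (k i)"
      have x: "0 < x" using q m False by (simp add: x_def)
      have "x ^ k i = exp (real (k i) * ln x)"
        using x by (simp add: exp_of_nat_mult)
      moreover have "(real (k i) / real m) / Q i = inverse x"
        by (simp add: x_def field_simps)
      moreover have "- real m * ((real (k i) / real m) * ln (inverse x)) = real (k i) * ln x"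
        using m x by (simp add: ln_inverse)
      ultimately show ?thesis using False by (simp add: f_def x_def[symmetric])
    qed
  qed
  also have "\<dots> = exp (- real m * sum f {..<n})"
    by (simp add: exp_sum[symmetric] sum_distrib_left)
  finally have b: "mprob m n Q k \<le> exp (- real m * sum f {..<n})" .
  have "KL n (emp_dist m k) Q = (\<Sum>i<n. ereal (f i))"
    unfolding KL_def
  proof (rule sum.cong[OF refl])
    fix i assume "i \<in> {..<n}"
    then have i: "i < n" by simp
    show "(if emp_dist m k i = 0 then 0 else if Q i = 0 then \<infinity> else ereal (emp_dist m k i * ln (emp_dist m k i / Q i))) = ereal (f i)"
      using Qpos[OF i] m by (auto simp: emp_dist_def f_def gr0_conv_Suc)
  qed
  also have "\<dots> = ereal (sum f {..<n})" by simp
  finally show ?thesis using b by blast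
qed


lemma typical_bound:
  fixes Q :: "nat \<Rightarrow> real"
  assumes Q: "Q \<in> prob_simplex n" and k: "k \<in> emp_counts m n" and m: "0 < m"
    and e: "0 < \<epsilon>" and t: "typical m n {Q} \<epsilon> k"
  shows "\<exists>D. KL n (emp_dist m k) Q = ereal D \<and>
     D \<le> 1 / real m * ln (1 / \<epsilon>) + real n / real m * ln (real m + 1)"
proof -
  obtain \<sigma> where s: "prob_ordering m n Q \<sigma>" using exists_ordering by blast
  have "(SUP Q'\<in>{Q}. prefix_mass m n Q' ((\<lambda>_. \<sigma>) Q') k) \<ge> \<epsilon>"
    using t unfolding typical_def apply (erule_tac x="\<lambda>_. \<sigma>" in allE) using s by simp
  then have pm: "prefix_mass m n Q \<sigma> k \<ge> \<epsilon>" by simp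
  define N where "N = card (emp_counts m n)"
  have bij: "bij_betw \<sigma> {..<N} (emp_counts m n)" using s by (simp add: prob_ordering_def N_def)
  have mono: "\<And>i j. i \<le> j \<Longrightarrow> j < N \<Longrightarrow> mprob m n Q (\<sigma> i) \<le> mprob m n Q (\<sigma> j)"
    using s by (simp add: prob_ordering_def N_def)
  define idx where "idx = the_inv_into {..<N} \<sigma> k"
  have inj: "inj_on \<sigma> {..<N}" using bij by (rule bij_betw_imp_inj_on)
  have kim: "k \<in> \<sigma> ` {..<N}" using bij k by (simp add: bij_betw_def)
  have idxN: "idx < N" using the_inv_into_into[OF inj kim, of "{..<N}"] by (simp add: idx_def)
  have sidx: "\<sigma> idx = k" using f_the_inv_into_f[OF inj kim] by (simp add: idx_def)
  have Qnn: "\<And>i. i < n \<Longrightarrow> 0 \<le> Q i" using Q by (simp add: prob_simplex_def)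
  have mpnn: "0 \<le> mprob m n Q k"
    unfolding mprob_def by (intro mult_nonneg_nonneg divide_nonneg_nonneg prod_nonneg) (auto simp: Qnn)
  have "prefix_mass m n Q \<sigma> k = (\<Sum>j\<in>{..idx}. mprob m n Q (\<sigma> j))"
    by (simp add: prefix_mass_def idx_def N_def)
  also have "\<dots> \<le> (\<Sum>j\<in>{..idx}. mprob m n Q k)"
    by (rule sum_mono) (use mono[of _ idx] idxN sidx in auto)
  also have "\<dots> = real (Suc idx) * mprob m n Q k" by simp
  also have "\<dots> \<le> real N * mprob m n Q k"
    using idxN mpnn by (intro mult_right_mono) auto
  also have "\<dots> \<le> real ((m+1)^n) * mprob m n Q k"
  proof (rule mult_right_mono[OF _ mpnn])
    have "N \<le> (m+1)^n" using emp_counts_fin[of m n] by (simp add: N_def)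
    then show "real N \<le> real ((m+1)^n)" by (rule of_nat_mono)
  qed
  finally have eb: "\<epsilon> \<le> (real m + 1) ^ n * mprob m n Q k" using pm by (simp add: add.commute)
  have mpos: "0 < mprob m n Q k"
  proof (rule ccontr)
    assume "\<not> 0 < mprob m n Q k"
    then have "mprob m n Q k = 0" using mpnn by simp
    then show False using eb e by simp
  qed
  obtain D where D: "KL n (emp_dist m k) Q = ereal D" "mprob m n Q k \<le> exp (- real m * D)"
    using mprob_bound[OF Q k m mpos] by blast
  have pp: "0 < (real m + 1) ^ n" by simp
  have "\<epsilon> \<le> (real m + 1) ^ n * exp (- real m * D)"
    using eb D(2) pp by (meson mult_left_mono less_imp_le order_trans)
  then have "ln \<epsilon> \<le> ln ((real m + 1) ^ n * exp (- real m * D))"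
    using e by (subst ln_le_cancel_iff) (use pp in auto)
  also have "\<dots> = real n * ln (real m + 1) - real m * D"
    using pp by (simp add: ln_mult ln_realpow)
  finally have "real m * D \<le> - ln \<epsilon> + real n * ln (real m + 1)" by simp
  then have "D \<le> (- ln \<epsilon> + real n * ln (real m + 1)) / real m"
    using m by (simp add: field_simps)
  also have "\<dots> = 1 / real m * ln (1 / \<epsilon>) + real n / real m * ln (real m + 1)"
  proof -
    have l: "ln (1 / \<epsilon>) = - ln \<epsilon>" using e by (simp add: ln_div)
    show ?thesis unfolding l by (simp add: add_divide_distrib diff_divide_distrib)
  qed
  finally show ?thesis using D(1) by blast
qed

theorem proposition2:
  fixes n p p' :: nat and \<epsilon> :: real and kP kQ :: "nat \<Rightarrow> nat"
  assumes "0 < \<epsilon>" and "\<epsilon> < 1"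
    and "0 < p" and "0 < p'"
    and "kP \<in> emp_counts p n" and "kQ \<in> emp_counts p' n"
    and "(INF Q\<in>{Q\<in>prob_simplex n. KL n (emp_dist p' kQ) Q
                  \<le> ereal (1 / real p' * ln (1 / \<epsilon>) + 2 * real n / real p' * ln (real p' + 1))}.
            KL n (emp_dist p kP) Q)
         \<ge> ereal (1 / real p * ln (1 / \<epsilon>) + 2 * real n / real p * ln (real p + 1))"
  shows "\<not> (\<exists>Q\<in>prob_simplex n. typical p' n {Q} \<epsilon> kQ \<and> typical p n {Q} \<epsilon> kP)"
proof
  assume "\<exists>Q\<in>prob_simplex n. typical p' n {Q} \<epsilon> kQ \<and> typical p n {Q} \<epsilon> kP"
  then obtain Q where Q: "Q \<in> prob_simplex n" and t1: "typical p' n {Q} \<epsilon> kQ"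
    and t2: "typical p n {Q} \<epsilon> kP" by blast
  have n: "0 < n"
  proof (rule ccontr)
    assume "\<not> 0 < n"
    then show False using assms(3,5) by (simp add: emp_counts_def)
  qed
  obtain D1 where D1: "KL n (emp_dist p' kQ) Q = ereal D1"
    "D1 \<le> 1 / real p' * ln (1 / \<epsilon>) + real n / real p' * ln (real p' + 1)"
    using typical_bound[OF Q assms(6) assms(4) assms(1) t1] by blast
  obtain D2 where D2: "KL n (emp_dist p kP) Q = ereal D2"
    "D2 \<le> 1 / real p * ln (1 / \<epsilon>) + real n / real p * ln (real p + 1)"
    using typical_bound[OF Q assms(5) assms(3) assms(1) t2] by blast
  have l1: "0 \<le> real n / real p' * ln (real p' + 1)" by simp
  have "D1 \<le> 1 / real p' * ln (1 / \<epsilon>) + 2 * real n / real p' * ln (real p' + 1)"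
  proof -
    define a where "a = real n / real p' * ln (real p' + 1)"
    have "2 * real n / real p' * ln (real p' + 1) = 2 * a" by (simp add: a_def)
    moreover have "0 \<le> a" "D1 \<le> 1 / real p' * ln (1 / \<epsilon>) + a" using D1(2) l1 by (simp_all add: a_def)
    ultimately show ?thesis by (metis add_left_mono order_trans mult_2 le_add_same_cancel2)
  qed
  then have Qin: "Q \<in> {Q\<in>prob_simplex n. KL n (emp_dist p' kQ) Q
                  \<le> ereal (1 / real p' * ln (1 / \<epsilon>) + 2 * real n / real p' * ln (real p' + 1))}"
    using Q D1(1) by simp
  have "(INF Q\<in>{Q\<in>prob_simplex n. KL n (emp_dist p' kQ) Q
                  \<le> ereal (1 / real p' * ln (1 / \<epsilon>) + 2 * real n / real p' * ln (real p' + 1))}.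
            KL n (emp_dist p kP) Q) \<le> KL n (emp_dist p kP) Q"
    by (rule INF_lower[OF Qin])
  from order_trans[OF assms(7) this]
  have "1 / real p * ln (1 / \<epsilon>) + 2 * real n / real p * ln (real p + 1) \<le> D2"
    unfolding D2(1) by (simp only: ereal_less_eq)
  moreover have "0 < real n / real p * ln (real p + 1)"
    using n assms(3) by (simp add: ln_gt_zero)
  moreover have "2 * real n / real p * ln (real p + 1) = 2 * (real n / real p * ln (real p + 1))" by simp
  ultimately show False using D2(2)
    by (smt (verit))
qed

end
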